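(* Suppose $\mathcal{F}=\{X;f_\lambda\mid\lambda\in\Lambda\}$ is a minimal IFS on an infinite compact metric space $X$ and $\mathcal{F}$ has some non-periodic regularly recurrent point. Then there exist a sequence $\alpha=(p_1,p_2,\dots)$ of prime numbers and a continuous surjective map $\pi:X\to\Delta_\alpha$ such that $g_\alpha\circ\pi=\pi\circ f_\lambda$ for all $\lambda\in\Lambda$. Moreover, $\pi^{-1}(\pi(x))=\{x\}$ for every regularly recurrent point $x\in X$.
   Context: $\Lambda$ is a finite nonempty set, $f_\lambda:X\to X$ continuous. $\Lambda^{\mathbb{Z}_+}$ is the set of sequences $\sigma=(\lambda_1,\lambda_2,\dots)$ in $\Lambda$, $\mathcal{F}_{\sigma_n}=f_{\lambda_n}\circ\cdots\circ f_{\lambda_1}$, $\mathcal{F}_{\sigma_0}=\mathrm{id}$. A nonempty closed $M\subseteq X$ is $\mathcal{F}^n$-minimal if $\mathcal{F}_{\sigma_n}(M)=M$ for all $\sigma$ and $\mathcal{F}_{\sigma_n}(A)\ne A$ for every nonempty proper $A\subsetneq M$ and every $\sigma$. $\mathcal{F}$ is minimal if the only $\mathcal{F}^1$-minimal set is $X$ (equivalently, every point has a dense set of iterates $f_{\lambda_k}\circ\cdots\circ f_{\lambda_1}(x)$, $k>0$). A point $x$ is regularly recurrent if for every neighborhood $U$ of $x$ there is $n\ge1$ with $\mathcal{F}_{\sigma_{ni}}(x)\in U$ for all $i\ge0$ and all $\sigma$. A point is periodic if some finite composition $f_{\lambda_n}\circ\cdots\circ f_{\lambda_1}$ fixes it.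 For $\alpha=(j_1,j_2,\dots)$ with integers $j_i\ge2$, $\Delta_\alpha$ is the set of sequences $(r_1,r_2,\dots)$ with $r_i\in\{0,\dots,j_i-1\}$, with metric $d_\alpha(r,s)=\sum_i\delta(r_i,s_i)/2^i$ ($\delta(a,b)=1$ if $a\ne b$, else $0$), and $g_\alpha:\Delta_\alpha\to\Delta_\alpha$ is the adding machine map $r\mapsto r+(1,0,0,\dots)$, addition being coordinatewise with carry (first coordinate mod $j_1$, carry into the second coordinate taken mod $j_2$, etc.). *)

theory Defs
  imports "HOL-Analysis.Analysis" "HOL-Computational_Algebra.Primes"
begin

primrec Fiter :: "('l \<Rightarrow> 'a \<Rightarrow> 'a) \<Rightarrow> (nat \<Rightarrow> 'l) \<Rightarrow> nat \<Rightarrow> 'a \<Rightarrow> 'a" where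
  "Fiter f \<sigma> 0 x = x"
| "Fiter f \<sigma> (Suc n) x = f (\<sigma> n) (Fiter f \<sigma> n x)"

definition ifs_minimal :: "'a::topological_space set \<Rightarrow> 'l set \<Rightarrow> ('l \<Rightarrow> 'a \<Rightarrow> 'a) \<Rightarrow> bool" where
  "ifs_minimal X \<Lambda> f \<longleftrightarrow>
     (\<forall>x\<in>X. X \<subseteq> closure {Fiter f \<sigma> k x | \<sigma> k. (\<forall>i. \<sigma> i \<in> \<Lambda>) \<and> k > 0})"

definition regularly_recurrent :: "'a::topological_space set \<Rightarrow> 'l set \<Rightarrow> ('l \<Rightarrow> 'a \<Rightarrow> 'a) \<Rightarrow> 'a \<Rightarrow> bool" where
  "regularly_recurrent X \<Lambda> f x \<longleftrightarrow> x \<in> X \<and>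
     (\<forall>U. open U \<and> x \<in> U \<longrightarrow>
        (\<exists>n\<ge>1. \<forall>\<sigma> i. (\<forall>j. \<sigma> j \<in> \<Lambda>) \<longrightarrow> Fiter f \<sigma> (n * i) x \<in> U))"

definition ifs_periodic :: "'l set \<Rightarrow> ('l \<Rightarrow> 'a \<Rightarrow> 'a) \<Rightarrow> 'a \<Rightarrow> bool" where
  "ifs_periodic \<Lambda> f x \<longleftrightarrow> (\<exists>\<sigma> n. (\<forall>j. \<sigma> j \<in> \<Lambda>) \<and> n \<ge> 1 \<and> Fiter f \<sigma> n x = x)"

text \<open>Adding machine on Delta_alpha; coordinates indexed from 0.\<close>
definition Delta :: "(nat \<Rightarrow> nat) \<Rightarrow> (nat \<Rightarrow> nat) set" where
  "Delta \<alpha> = {r. \<forall>i. r i < \<alpha> i}"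

definition d_alpha :: "(nat \<Rightarrow> nat) \<Rightarrow> (nat \<Rightarrow> nat) \<Rightarrow> real" where
  "d_alpha r s = (\<Sum>i. (if r i \<noteq> s i then 1 else 0) / 2 ^ (Suc i))"

primrec carry :: "(nat \<Rightarrow> nat) \<Rightarrow> (nat \<Rightarrow> nat) \<Rightarrow> nat \<Rightarrow> nat" where
  "carry \<alpha> r 0 = 1"
| "carry \<alpha> r (Suc i) = (r i + carry \<alpha> r i) div \<alpha> i"

definition adding_machine :: "(nat \<Rightarrow> nat) \<Rightarrow> (nat \<Rightarrow> nat) \<Rightarrow> (nat \<Rightarrow> nat)" where
  "adding_machine \<alpha> r = (\<lambda>i. (r i + carry \<alpha> r i) mod \<alpha> i)"

end

theory Submission imports Defs begin

lemma Fiter_cong: "(\<And>i. i < k \<Longrightarrow> \<sigma> i = \<tau> i) \<Longrightarrow> Fiter f \<sigma> k x = Fiter f \<tau> k x"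
  by (induction k) auto

lemma Fiter_add: "Fiter f \<sigma> (k + m) x = Fiter f (\<lambda>i. \<sigma> (i + k)) m (Fiter f \<sigma> k x)"
  by (induction m) (auto simp: add.commute)

definition cat :: "nat \<Rightarrow> (nat \<Rightarrow> 'l) \<Rightarrow> (nat \<Rightarrow> 'l) \<Rightarrow> nat \<Rightarrow> 'l" where
  "cat k \<sigma> \<tau> i = (if i < k then \<sigma> i else \<tau> (i - k))"

lemma Fiter_cat: "Fiter f \<tau> m (Fiter f \<sigma> k x) = Fiter f (cat k \<sigma> \<tau>) (k + m) x"
proof -
  have "Fiter f (cat k \<sigma> \<tau>) (k + m) x = Fiter f (\<lambda>i. cat k \<sigma> \<tau> (i + k)) m (Fiter f (cat k \<sigma> \<tau>) k x)"
    by (rule Fiter_add)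
  also have "(\<lambda>i. cat k \<sigma> \<tau> (i + k)) = \<tau>" by (auto simp: cat_def)
  also have "Fiter f (cat k \<sigma> \<tau>) k x = Fiter f \<sigma> k x" by (rule Fiter_cong) (auto simp: cat_def)
  finally show ?thesis by simp
qed

lemma Fiter_one: "Fiter f (\<lambda>_. l) 1 x = f l x" by simp

lemma div_mod_digit: "(m mod (n * q)) div n = (m div n) mod (q::nat)"
  by (cases "n = 0") (simp_all add: mod_mult2_eq)

lemma mod_lcm_eq:
  fixes j j' p q :: nat
  assumes "j mod p = j' mod p" "j mod q = j' mod q"
  shows "j mod lcm p q = j' mod lcm p q"
proof -
  { fix a b :: nat assume ab: "a \<le> b" "a mod p = b mod p" "a mod q = b mod q"
    then have "p dvd b - a" "q dvd b - a" using mod_eq_dvd_iff_nat[of a b] by (metis)+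
    then have "lcm p q dvd b - a" by (rule lcm_least)
    then have "a mod lcm p q = b mod lcm p q" using ab(1) mod_eq_dvd_iff_nat[of a b] by metis }
  then show ?thesis using assms by (metis nle_le)
qed

lemma mod_add_cancel_lt:
  fixes c t t' M :: nat
  assumes "(c + t) mod M = (c + t') mod M" "t < M" "t' < M"
  shows "t = t'"
proof -
  { fix a b :: nat assume ab: "a \<le> b" "(c + a) mod M = (c + b) mod M" "b < M"
    then have "M dvd (c + b) - (c + a)" using mod_eq_dvd_iff_nat[of "c + a" "c + b" M] by simp
    then have "M dvd b - a" by simp
    moreover have "b - a < M" using ab by simp
    ultimately have "b - a = 0" using dvd_imp_le by (metis gr0I leD)
    then have "a = b" using ab by simp }
  then show ?thesis using assms by (metis nle_le)
qed

lemma carry_val: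
  fixes N \<alpha> r :: "nat \<Rightarrow> nat"
  assumes N0: "N 0 = 1" and NS: "\<And>t. N (Suc t) = N t * \<alpha> t" and pos: "\<And>t. \<alpha> t > 0"
  shows "carry \<alpha> r i = ((\<Sum>t<i. r t * N t) + 1) div N i"
proof (induction i)
  case 0 then show ?case using N0 by simp
next
  case (Suc i)
  have Npos: "N j > 0" for j by (induction j) (use N0 NS pos in auto)
  define v where "v = (\<Sum>t<i. r t * N t)"
  have "((\<Sum>t<Suc i. r t * N t) + 1) div N (Suc i) = ((v + 1 + r i * N i) div N i) div \<alpha> i"
    unfolding v_def NS by (simp add: div_mult2_eq add_ac)
  also have "(v + 1 + r i * N i) div N i = r i + (v + 1) div N i" using Npos[of i] div_mult_self1[of "N i" "v + 1" "r i"] by linarith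
  finally show ?case using Suc unfolding v_def by simp
qed

lemma am_val:
  fixes N \<alpha> r :: "nat \<Rightarrow> nat"
  assumes N0: "N 0 = 1" and NS: "\<And>t. N (Suc t) = N t * \<alpha> t" and pos: "\<And>t. \<alpha> t > 0"
  shows "adding_machine \<alpha> r i = ((((\<Sum>t<Suc i. r t * N t) + 1) mod N (Suc i)) div N i)"
proof -
  have Npos: "N j > 0" for j by (induction j) (use N0 NS pos in auto)
  define v where "v = (\<Sum>t<i. r t * N t)"
  have "(((\<Sum>t<Suc i. r t * N t) + 1) mod N (Suc i)) div N i = (((v + 1 + r i * N i) div N i) mod \<alpha> i)"
    unfolding NS v_def by (simp add: div_mod_digit add_ac)
  also have "(v + 1 + r i * N i) div N i = r i + (v + 1) div N i" using Npos[of i] div_mult_self1[of "N i" "v + 1" "r i"] by linarith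
  finally show ?thesis unfolding adding_machine_def carry_val[OF assms] v_def by simp
qed

lemma d_alpha_bound:
  assumes "\<And>t. t < K \<Longrightarrow> r t = s t"
  shows "d_alpha r s \<le> (1/2) ^ K"
proof -
  define g where "g i = (if r i \<noteq> s i then 1 else 0) / (2::real) ^ (Suc i)" for i
  have g0: "0 \<le> g i" for i by (simp add: g_def)
  have gle: "g i \<le> (1/2) ^ Suc i" for i by (simp add: g_def power_one_over)
  have geo: "summable (\<lambda>i. (1/2::real) ^ Suc i)" by simp
  have sg: "summable g"
    by (rule summable_comparison_test[OF _ geo]) (use g0 gle in auto)
  have gK: "g i = 0" if "i < K" for i using assms that by (simp add: g_def)
  have "d_alpha r s = suminf g" unfolding d_alpha_def g_def by (rule refl)
  also have "\<dots> = (\<Sum>n. g (n + K)) + (\<Sum>i<K. g i)" by (rule suminf_split_initial_segment[OF sg])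
  also have "(\<Sum>i<K. g i) = 0" using gK by simp
  also have "(\<Sum>n. g (n + K)) \<le> (\<Sum>n. (1/2::real) ^ K * ((1/2) * (1/2) ^ n))"
  proof (rule suminf_le)
    show "g (n + K) \<le> (1/2) ^ K * ((1/2) * (1/2) ^ n)" for n
      using gle[of "n + K"] by (simp add: power_add mult_ac)
    show "summable (\<lambda>n. g (n + K))" using sg by (simp add: summable_iff_shift)
    show "summable (\<lambda>n. (1/2::real) ^ K * ((1/2) * (1/2) ^ n))"
      by (intro summable_mult summable_geometric) simp
  qed
  also have "(\<Sum>n. (1/2::real) ^ K * ((1/2) * (1/2) ^ n)) = (1/2) ^ K"
  proof -
    have "(\<lambda>n. (1/2::real) ^ n) sums (1 / (1 - 1/2))" by (rule geometric_sums) simp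
    then have "(\<lambda>n. (1/2::real) ^ K * ((1/2) * (1/2) ^ n)) sums ((1/2) ^ K * ((1/2) * (1 / (1 - 1/2))))"
      by (intro sums_mult)
    then show ?thesis by (simp add: sums_iff)
  qed
  finally show ?thesis by simp
qed

locale ifs =
  fixes X :: "'a::metric_space set" and \<Lambda> :: "'l set" and f :: "'l \<Rightarrow> 'a \<Rightarrow> 'a"
  assumes fin: "finite \<Lambda>" and ne: "\<Lambda> \<noteq> {}"
    and cpt: "compact X"
    and cont: "\<And>l. l \<in> \<Lambda> \<Longrightarrow> continuous_on X (f l)"
    and inv: "\<And>l. l \<in> \<Lambda> \<Longrightarrow> f l ` X \<subseteq> X"
    and minl: "ifs_minimal X \<Lambda> f"
begin

definition adm :: "(nat \<Rightarrow> 'l) \<Rightarrow> bool" where "adm \<sigma> \<longleftrightarrow> (\<forall>i. \<sigma> i \<in> \<Lambda>)"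

definition lev :: "'a \<Rightarrow> nat \<Rightarrow> nat \<Rightarrow> 'a set" where
  "lev b n j = {Fiter f \<sigma> k b | \<sigma> k. adm \<sigma> \<and> k mod n = j}"

definition Q :: "'a \<Rightarrow> nat \<Rightarrow> nat \<Rightarrow> 'a set" where
  "Q b n j = closure (lev b n j)"

lemma closedX: "closed X" using cpt compact_imp_closed by blast

lemma adm_cat: "adm \<sigma> \<Longrightarrow> adm \<tau> \<Longrightarrow> adm (cat k \<sigma> \<tau>)"
  by (auto simp: adm_def cat_def)

lemma adm_shift: "adm \<sigma> \<Longrightarrow> adm (\<lambda>i. \<sigma> (i + k))"
  by (auto simp: adm_def)

lemma some_adm: "\<exists>\<tau>. adm \<tau>" using ne by (auto simp: adm_def)

lemma Fiter_in: "b \<in> X \<Longrightarrow> adm \<sigma> \<Longrightarrow> Fiter f \<sigma> k b \<in> X"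
  by (induction k) (use inv in \<open>auto simp: adm_def\<close>)

lemma Fiter_cont: "adm \<sigma> \<Longrightarrow> continuous_on X (Fiter f \<sigma> k)"
proof (induction k)
  case 0 then show ?case by (simp add: continuous_on_id')
next
  case (Suc k)
  have "continuous_on X (\<lambda>x. f (\<sigma> k) (Fiter f \<sigma> k x))"
    by (rule continuous_on_compose2[OF cont Suc.IH]) (use Suc.prems Fiter_in in \<open>auto simp: adm_def\<close>)
  then show ?case by simp
qed

lemma lev_sub: "b \<in> X \<Longrightarrow> lev b n j \<subseteq> X"
  using Fiter_in by (auto simp: lev_def)

lemma Q_sub: "b \<in> X \<Longrightarrow> Q b n j \<subseteq> X"
  unfolding Q_def using lev_sub closedX by (simp add: closure_minimal)

lemma closed_Q: "closed (Q b n j)" by (simp add: Q_def)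

lemma lev_in_Q: "lev b n j \<subseteq> Q b n j" by (simp add: Q_def closure_subset)

lemma Fiter_in_Q: "adm \<sigma> \<Longrightarrow> Fiter f \<sigma> k b \<in> Q b n (k mod n)"
  using lev_in_Q unfolding lev_def by blast

lemma base_in_Q0: "b \<in> Q b n 0"
proof -
  obtain \<tau> where "adm \<tau>" using some_adm by blast
  from Fiter_in_Q[OF this, of 0 b n] show ?thesis by simp
qed

lemma Fiter_maps_Q:
  assumes b: "b \<in> X" and \<tau>: "adm \<tau>"
  shows "Fiter f \<tau> m ` Q b n j \<subseteq> Q b n ((j + m) mod n)"
  unfolding Q_def
proof (rule image_closure_subset)
  show "continuous_on (closure (lev b n j)) (Fiter f \<tau> m)"
    using Fiter_cont[OF \<tau>] Q_sub[OF b] unfolding Q_def by (rule continuous_on_subset)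
  show "closed (closure (lev b n ((j + m) mod n)))" by simp
  show "Fiter f \<tau> m ` lev b n j \<subseteq> closure (lev b n ((j + m) mod n))"
  proof
    fix z assume "z \<in> Fiter f \<tau> m ` lev b n j"
    then obtain \<sigma> k where z: "z = Fiter f \<tau> m (Fiter f \<sigma> k b)" "adm \<sigma>" "k mod n = j"
      by (auto simp: lev_def)
    then have "z = Fiter f (cat k \<sigma> \<tau>) (k + m) b" by (simp add: Fiter_cat)
    moreover have "(k + m) mod n = (j + m) mod n" using z(3) by (metis mod_add_left_eq)
    ultimately have "z \<in> lev b n ((j + m) mod n)"
      using adm_cat[OF z(2) \<tau>] unfolding lev_def by blast
    then show "z \<in> closure (lev b n ((j + m) mod n))" using closure_subset by blast
  qed
qed

lemma f_maps_Q:
  assumes "b \<in> X" "l \<in> \<Lambda>" "z \<in> Q b n j"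
  shows "f l z \<in> Q b n ((j + 1) mod n)"
proof -
  have "adm (\<lambda>_. l)" using assms by (simp add: adm_def)
  from Fiter_maps_Q[OF assms(1) this, of 1 n j] assms(3) show ?thesis by force
qed

lemma cover:
  assumes b: "b \<in> X" and n: "n > 0"
  shows "X \<subseteq> (\<Union>j<n. Q b n j)"
proof -
  have "X \<subseteq> closure {Fiter f \<sigma> k b | \<sigma> k. (\<forall>i. \<sigma> i \<in> \<Lambda>) \<and> k > 0}"
    using minl b by (auto simp: ifs_minimal_def)
  also have "\<dots> \<subseteq> closure (\<Union>j<n. lev b n j)"
  proof (rule closure_mono, rule subsetI)
    fix z assume "z \<in> {Fiter f \<sigma> k b | \<sigma> k. (\<forall>i. \<sigma> i \<in> \<Lambda>) \<and> k > 0}"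
    then obtain \<sigma> k where z: "z = Fiter f \<sigma> k b" "adm \<sigma>" by (auto simp: adm_def)
    then have "z \<in> lev b n (k mod n)" unfolding lev_def by blast
    then show "z \<in> (\<Union>j<n. lev b n j)" using n by auto
  qed
  also have "\<dots> \<subseteq> (\<Union>j<n. Q b n j)"
    by (rule closure_minimal) (auto simp: Q_def intro: closure_subset[THEN subsetD])
  finally show ?thesis .
qed

lemma Q_mono_dvd:
  assumes "d dvd n"
  shows "Q b n j \<subseteq> Q b d (j mod d)"
  unfolding Q_def
proof (rule closure_mono, rule subsetI)
  fix z assume "z \<in> lev b n j"
  then obtain \<sigma> k where z: "z = Fiter f \<sigma> k b" "adm \<sigma>" "k mod n = j" by (auto simp: lev_def)
  then have "k mod d = j mod d" using assms by (metis mod_mod_cancel)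
  then show "z \<in> lev b d (j mod d)" using z unfolding lev_def by blast
qed

lemma Q_rep:
  assumes "d dvd n" "n > 0"
  shows "Q b d a \<subseteq> (\<Union>j\<in>{j. j < n \<and> j mod d = a}. Q b n j)"
  unfolding Q_def
proof (rule closure_minimal)
  show "lev b d a \<subseteq> (\<Union>j\<in>{j. j < n \<and> j mod d = a}. closure (lev b n j))"
  proof
    fix z assume "z \<in> lev b d a"
    then obtain \<sigma> k where z: "z = Fiter f \<sigma> k b" "adm \<sigma>" "k mod d = a" by (auto simp: lev_def)
    have "k mod n < n" "(k mod n) mod d = a" using assms z(3) by (auto simp: mod_mod_cancel)
    moreover have "z \<in> lev b n (k mod n)"
      using z unfolding lev_def by blast
    hence "z \<in> closure (lev b n (k mod n))" using closure_subset by blast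
    ultimately show "z \<in> (\<Union>j\<in>{j. j < n \<and> j mod d = a}. closure (lev b n j))" by blast
  qed
  show "closed (\<Union>j\<in>{j. j < n \<and> j mod d = a}. closure (lev b n j))"
    by (rule closed_UN) auto
qed

lemma Q_shift:
  assumes b: "b \<in> X" and bc: "b \<in> Q a n c" and a: "a \<in> X"
  shows "Q b n t \<subseteq> Q a n ((c + t) mod n)"
  unfolding Q_def
proof (rule closure_minimal)
  show "closed (closure (lev a n ((c + t) mod n)))" by simp
  show "lev b n t \<subseteq> closure (lev a n ((c + t) mod n))"
  proof
    fix z assume "z \<in> lev b n t"
    then obtain \<sigma> k where z: "z = Fiter f \<sigma> k b" "adm \<sigma>" "k mod n = t" by (auto simp: lev_def)
    have "z \<in> Q a n ((c + k) mod n)" using Fiter_maps_Q[OF a z(2), of k n c] bc z(1) by blast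
    moreover have "(c + k) mod n = (c + t) mod n" using z(3) by (metis mod_add_right_eq)
    ultimately show "z \<in> closure (lev a n ((c + t) mod n))" by (simp add: Q_def)
  qed
qed

lemma Q_nonempty:
  assumes "b \<in> X" "j < n"
  shows "Q b n j \<noteq> {}"
proof -
  obtain \<tau> where "adm \<tau>" using some_adm by blast
  from Fiter_in_Q[OF this, of j b n] assms show ?thesis by auto
qed


lemma rr_D:
  assumes "regularly_recurrent X \<Lambda> f b" "open U" "b \<in> U"
  shows "\<exists>n\<ge>1. \<forall>\<sigma> i. adm \<sigma> \<longrightarrow> Fiter f \<sigma> (n * i) b \<in> U"
  using assms unfolding regularly_recurrent_def adm_def by blast

lemma Q0_return:
  assumes b: "b \<in> X" "regularly_recurrent X \<Lambda> f b" and n: "n > 0" and w: "w \<in> Q b n 0"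
  shows "b \<in> closure {Fiter f \<tau> (n * i) w | \<tau> i. adm \<tau>}"
  unfolding closure_approachable
proof (intro allI impI)
  fix e :: real assume e: "e > 0"
  obtain n' where n': "n' \<ge> 1" "\<forall>\<sigma> i. adm \<sigma> \<longrightarrow> Fiter f \<sigma> (n' * i) b \<in> ball b (e/2)"
    using rr_D[OF b(2), of "ball b (e/2)"] e by auto
  define A where "A t = X \<inter> (\<Inter>\<tau>\<in>{\<tau>. adm \<tau>}. X \<inter> Fiter f \<tau> (n * t) -` cball b (e/2))" for t
  have clA: "closed (A t)" for t
    unfolding A_def
    by (intro closed_Int closedX closed_INT ballI continuous_closed_preimage Fiter_cont) auto
  have "lev b n 0 \<subseteq> (\<Union>t<n'. A t)"
  proof
    fix y assume "y \<in> lev b n 0"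
    then obtain \<sigma> k where y: "y = Fiter f \<sigma> k b" "adm \<sigma>" "k mod n = 0" by (auto simp: lev_def)
    obtain i where k: "k = n * i" using y(3) by blast
    define t where "t = (n' - i mod n') mod n'"
    have t: "t < n'" using n' by (simp add: t_def)
    have "(i + t) mod n' = 0"
    proof (cases "i mod n' = 0")
      case True then show ?thesis by (simp add: t_def mod_add_left_eq[symmetric])
    next
      case False
      have "i mod n' < n'" using n' by simp
      then have "t = n' - i mod n'" using False by (simp add: t_def)
      then have "i mod n' + t = n'" using \<open>i mod n' < n'\<close> by simp
      then show ?thesis by (metis mod_add_left_eq mod_self)
    qed
    then obtain q where q: "i + t = n' * q" by blast
    have "y \<in> A t" unfolding A_def
    proof (intro IntI InterI)
      show yX: "y \<in> X" using y Fiter_in b by simp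
      fix S assume "S \<in> (\<lambda>\<tau>. X \<inter> Fiter f \<tau> (n * t) -` cball b (e / 2)) ` {\<tau>. adm \<tau>}"
      then obtain \<tau> where \<tau>: "adm \<tau>" "S = X \<inter> Fiter f \<tau> (n * t) -` cball b (e / 2)" by auto
      have "Fiter f \<tau> (n * t) y = Fiter f (cat k \<sigma> \<tau>) (k + n * t) b" by (simp add: y Fiter_cat)
      also have "k + n * t = n' * (n * q)" proof -
        have "k + n * t = n * (i + t)" using k by (simp add: distrib_left)
        also have "\<dots> = n' * (n * q)" using q by simp
        finally show ?thesis .
      qed
      finally have "Fiter f \<tau> (n * t) y \<in> ball b (e/2)" using n'(2) adm_cat[OF y(2) \<tau>(1)] by simp
      then show "y \<in> S" using \<tau> yX by auto
    qed
    then show "y \<in> (\<Union>t<n'. A t)" using t by blast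
  qed
  then have "Q b n 0 \<subseteq> (\<Union>t<n'. A t)"
    unfolding Q_def by (intro closure_minimal closed_UN) (auto intro: clA)
  then obtain t where "w \<in> A t" using w by blast
  obtain \<tau> where \<tau>: "adm \<tau>" using some_adm by blast
  have "Fiter f \<tau> (n * t) w \<in> cball b (e/2)" using \<open>w \<in> A t\<close> \<tau> unfolding A_def by blast
  then have "dist (Fiter f \<tau> (n * t) w) b < e" using e by (simp add: dist_commute)
  then show "\<exists>y\<in>{Fiter f \<tau> (n * i) w | \<tau> i. adm \<tau>}. dist y b < e" using \<tau> by blast
qed

lemma Q_overlap:
  assumes b: "b \<in> X" "regularly_recurrent X \<Lambda> f b" and n: "n > 0" and c: "c < n"
    and w: "w \<in> Q b n 0" "w \<in> Q b n c"
  shows "b \<in> Q b n c"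
proof -
  have "{Fiter f \<tau> (n * i) w | \<tau> i. adm \<tau>} \<subseteq> Q b n c"
  proof
    fix z assume "z \<in> {Fiter f \<tau> (n * i) w | \<tau> i. adm \<tau>}"
    then obtain \<tau> i where z: "z = Fiter f \<tau> (n * i) w" "adm \<tau>" by blast
    have "z \<in> Q b n ((c + n * i) mod n)" using Fiter_maps_Q[OF b(1) z(2), of "n*i" n c] w(2) z(1) by blast
    then show "z \<in> Q b n c" using c by simp
  qed
  then have "closure {Fiter f \<tau> (n * i) w | \<tau> i. adm \<tau>} \<subseteq> Q b n c"
    by (intro closure_minimal closed_Q)
  then show ?thesis using Q0_return[OF b n w(1)] by blast
qed

lemma H_add:
  assumes "b \<in> X" "b \<in> Q b n c" "b \<in> Q b n c'"
  shows "b \<in> Q b n ((c + c') mod n)"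
  using Q_shift[OF assms(1) assms(3) assms(1), of c] assms(2) by (auto simp: add.commute)

lemma H_mult:
  assumes "b \<in> X" "b \<in> Q b n c"
  shows "b \<in> Q b n ((m * c) mod n)"
proof (induction m)
  case 0 then show ?case using base_in_Q0 by simp
next
  case (Suc m)
  from H_add[OF assms(1) assms(2) Suc] have "b \<in> Q b n ((c + m * c) mod n)" by (metis mod_add_right_eq)
  then show ?case by (simp add: add.commute)
qed

definition good :: "'a \<Rightarrow> nat \<Rightarrow> bool" where
  "good b d \<longleftrightarrow> d > 0 \<and> (\<forall>j j'. j < d \<longrightarrow> j' < d \<longrightarrow> j \<noteq> j' \<longrightarrow> Q b d j \<inter> Q b d j' = {})"


lemma dec:
  assumes b: "b \<in> X" "regularly_recurrent X \<Lambda> f b" and n: "n > 0"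
  shows "\<exists>d. 0 < d \<and> d dvd n \<and> good b d \<and> Q b d 0 \<subseteq> Q b n 0 \<and> (d = n \<or> (d < n \<and> b \<in> Q b n d))"
proof -
  define P where "P d \<longleftrightarrow> 0 < d \<and> (d = n \<or> (d < n \<and> b \<in> Q b n d))" for d
  define d where "d = (LEAST d. P d)"
  have Pn: "P n" using n by (simp add: P_def)
  have Pd: "P d" unfolding d_def using Pn by (rule LeastI)
  have dn: "d \<le> n" unfolding d_def using Pn by (rule Least_le)
  have dpos: "0 < d" using Pd by (simp add: P_def)
  have minl: "b \<notin> Q b n c" if "0 < c" "c < d" for c
  proof
    assume "b \<in> Q b n c"
    then have "P c" using that dn by (simp add: P_def)
    then have "d \<le> c" unfolding d_def by (rule Least_le)
    then show False using that by simp
  qed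
  have hd: "b \<in> Q b n (d mod n)"
  proof (cases "d = n")
    case True then show ?thesis using base_in_Q0 by simp
  next
    case False then have "d < n" "b \<in> Q b n d" using Pd dn by (auto simp: P_def)
    then show ?thesis by simp
  qed
  have hmul: "b \<in> Q b n ((m * d) mod n)" for m
    using H_mult[OF b(1) hd, of m] by (metis mod_mult_right_eq)
  have ddvd: "d dvd n"
  proof (rule ccontr)
    assume nd: "\<not> d dvd n"
    define r where "r = n mod d"
    have r: "0 < r" "r < d" using nd dpos by (auto simp: r_def mod_eq_0_iff_dvd[symmetric])
    have "d \<noteq> n" using nd by auto
    then have dn': "d < n" using dn by simp
    have "(n div d + 1) * d = n + (d - r)"
    proof -
      have "n div d * d + r = n" using div_mult_mod_eq[of n d] unfolding r_def .
      then show ?thesis using r by (simp add: algebra_simps)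
    qed
    moreover have "(n + (d - r)) mod n = d - r"
    proof -
      have "(n + (d - r)) mod n = (d - r) mod n" by simp
      also have "\<dots> = d - r" using dn' r by (intro mod_less) linarith
      finally show ?thesis .
    qed
    ultimately have "((n div d + 1) * d) mod n = d - r" by simp
    then have "b \<in> Q b n (d - r)" using hmul[of "n div d + 1"] by simp
    then show False using minl[of "d - r"] r by simp
  qed
  have dvdH: "d dvd c" if c: "c < n" "b \<in> Q b n c" for c
  proof (rule ccontr)
    assume nd: "\<not> d dvd c"
    define s where "s = c mod d"
    have s: "0 < s" "s < d" using nd dpos by (auto simp: s_def mod_eq_0_iff_dvd[symmetric])
    define m where "m = n div d - c div d"
    have nn: "n div d * d = n" using ddvd by simp
    have cd: "c div d * d \<le> c" by simp
    have le: "c div d \<le> n div d" using c(1) by (simp add: div_le_mono)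
    have "m * d = n - c div d * d" unfolding m_def using nn by (simp add: diff_mult_distrib)
    then have "c + m * d = s + n" using cd c(1) div_mult_mod_eq[of c d] unfolding s_def by linarith
    moreover have "b \<in> Q b n ((c + (m * d) mod n) mod n)" using H_add[OF b(1) c(2) hmul[of m]] .
    ultimately have "b \<in> Q b n s" using s dn by (simp add: mod_add_right_eq)
    then show False using minl s by blast
  qed
  have good: "good b d"
    unfolding good_def
  proof (intro conjI allI impI dpos)
    fix j j' assume j: "j < d" "j' < d" "j \<noteq> j'"
    show "Q b d j \<inter> Q b d j' = {}"
    proof (rule ccontr)
      assume "Q b d j \<inter> Q b d j' \<noteq> {}"
      then obtain z where z: "z \<in> Q b d j" "z \<in> Q b d j'" by blast
      obtain a where a: "a < n" "a mod d = j" "z \<in> Q b n a" using Q_rep[OF ddvd n] z(1) by blast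
      obtain a' where a': "a' < n" "a' mod d = j'" "z \<in> Q b n a'" using Q_rep[OF ddvd n] z(2) by blast
      obtain \<tau> where \<tau>: "adm \<tau>" using some_adm by blast
      define z' where "z' = Fiter f \<tau> (n - a) z"
      have "z' \<in> Q b n ((a + (n - a)) mod n)" using Fiter_maps_Q[OF b(1) \<tau>, of "n - a" n a] a(3) unfolding z'_def by blast
      then have z0: "z' \<in> Q b n 0" using a(1) by simp
      define c where "c = (a' + (n - a)) mod n"
      have zc: "z' \<in> Q b n c" using Fiter_maps_Q[OF b(1) \<tau>, of "n - a" n a'] a'(3) unfolding z'_def c_def by blast
      have cn: "c < n" using n by (simp add: c_def)
      have "b \<in> Q b n c" by (rule Q_overlap[OF b n cn z0 zc])
      then have "d dvd c" using dvdH cn by blast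
      then have "(a' + (n - a)) mod d = 0" unfolding c_def using ddvd by (metis mod_mod_cancel mod_eq_0_iff_dvd)
      then have "(a' + (n - a) + a) mod d = a mod d" by (metis add_0 mod_add_left_eq)
      moreover have "a' + (n - a) + a = a' + n" using a(1) by simp
      moreover have "(a' + n) mod d = a' mod d" using ddvd by (metis mod_add_right_eq add_0_right mod_eq_0_iff_dvd)
      ultimately have "a mod d = a' mod d" by simp
      then show False using a a' j by simp
    qed
  qed
  have sub: "Q b d 0 \<subseteq> Q b n 0"
  proof
    fix z assume "z \<in> Q b d 0"
    then have "z \<in> (\<Union>j\<in>{j. j < n \<and> j mod d = 0}. Q b n j)" using Q_rep[OF ddvd n, of b 0] by (rule subsetD[rotated])
    then obtain a where "a \<in> {j. j < n \<and> j mod d = 0}" and a3: "z \<in> Q b n a" by (rule UN_E)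
    then have a: "a < n" "a mod d = 0" "z \<in> Q b n a" by auto
    define m where "m = a div d"
    have am: "a = m * d" using a(2) div_mult_mod_eq[of a d] unfolding m_def by simp
    have ba: "b \<in> Q b n a" using hmul[of m] am a(1) by simp
    have "b \<in> Q b n (((n - 1) * a) mod n)" using H_mult[OF b(1) ba] .
    from Q_shift[OF b(1) this b(1), where t = a] have "Q b n a \<subseteq> Q b n ((((n - 1) * a) mod n + a) mod n)" .
    moreover have "(((n - 1) * a) mod n + a) mod n = 0"
    proof -
      have "(((n - 1) * a) mod n + a) mod n = ((n - 1) * a + a) mod n" by (simp add: mod_add_left_eq)
      also have "(n - 1) * a + a = n * a" using n by (cases n) auto
      finally show ?thesis by simp
    qed
    ultimately show "z \<in> Q b n 0" using a(3) by auto
  qed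
  have "d = n \<or> (d < n \<and> b \<in> Q b n d)" using Pd unfolding P_def by simp
  then show ?thesis
    using dpos ddvd good sub by blast
qed

lemma good_transfer:
  assumes a: "a \<in> X" and b: "b \<in> X" and g: "good a n"
  shows "good b n"
proof -
  have n: "n > 0" using g by (simp add: good_def)
  obtain c where c: "c < n" "b \<in> Q a n c" using cover[OF a n] b by blast
  show ?thesis unfolding good_def
  proof (intro conjI allI impI n)
    fix t t' assume t: "t < n" "t' < n" "t \<noteq> t'"
    have "(c + t) mod n \<noteq> (c + t') mod n" using mod_add_cancel_lt t by blast
    then have "Q a n ((c + t) mod n) \<inter> Q a n ((c + t') mod n) = {}" using g n unfolding good_def by simp
    then show "Q b n t \<inter> Q b n t' = {}" using Q_shift[OF b c(2) a, of t] Q_shift[OF b c(2) a, of t'] by blast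
  qed
qed

lemma good_dvd:
  assumes g: "good b n" and d: "d dvd n" "d > 0"
  shows "good b d"
  unfolding good_def
proof (intro conjI allI impI d(2))
  have n: "n > 0" using g by (simp add: good_def)
  fix j j' assume j: "j < d" "j' < d" "j \<noteq> j'"
  show "Q b d j \<inter> Q b d j' = {}"
  proof (rule ccontr)
    assume "Q b d j \<inter> Q b d j' \<noteq> {}"
    then obtain z where z: "z \<in> Q b d j" "z \<in> Q b d j'" by blast
    obtain a where a: "a < n" "a mod d = j" "z \<in> Q b n a" using Q_rep[OF d(1) n] z(1) by blast
    obtain a' where a': "a' < n" "a' mod d = j'" "z \<in> Q b n a'" using Q_rep[OF d(1) n] z(2) by blast
    have "a \<noteq> a'" using a a' j by auto
    then show False using g a a' unfolding good_def by blast
  qed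
qed

lemma good_lcm:
  assumes g: "good b p" "good b q"
  shows "good b (lcm p q)"
  unfolding good_def
proof (intro conjI allI impI)
  have pq: "p > 0" "q > 0" using g by (auto simp: good_def)
  then show "lcm p q > 0" by (simp add: lcm_pos_nat)
  fix j j' assume j: "j < lcm p q" "j' < lcm p q" "j \<noteq> j'"
  have s1: "Q b (lcm p q) j \<subseteq> Q b p (j mod p)" "Q b (lcm p q) j' \<subseteq> Q b p (j' mod p)"
    by (rule Q_mono_dvd, simp)+
  have s2: "Q b (lcm p q) j \<subseteq> Q b q (j mod q)" "Q b (lcm p q) j' \<subseteq> Q b q (j' mod q)"
    by (rule Q_mono_dvd, simp)+
  show "Q b (lcm p q) j \<inter> Q b (lcm p q) j' = {}"
  proof (cases "j mod p = j' mod p")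
    case False
    then have "Q b p (j mod p) \<inter> Q b p (j' mod p) = {}" using g(1) pq unfolding good_def by simp
    then show ?thesis using s1 by blast
  next
    case T1: True
    show ?thesis
    proof (cases "j mod q = j' mod q")
      case False
      then have "Q b q (j mod q) \<inter> Q b q (j' mod q) = {}" using g(2) pq unfolding good_def by simp
      then show ?thesis using s2 by blast
    next
      case True
      then have "j mod lcm p q = j' mod lcm p q" using mod_lcm_eq T1 by blast
      then show ?thesis using j by simp
    qed
  qed
qed

lemma good_one: "good b 1" by (simp add: good_def)
lemma good_Suc0: "good b (Suc 0)" by (simp add: good_def)

definition cls :: "'a \<Rightarrow> nat \<Rightarrow> 'a \<Rightarrow> nat" where
  "cls b n x = (THE j. j < n \<and> x \<in> Q b n j)"

lemma cls_unique:
  assumes "good b n" "j < n" "x \<in> Q b n j"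
  shows "cls b n x = j"
  unfolding cls_def
proof (rule the_equality)
  show "j < n \<and> x \<in> Q b n j" using assms by simp
  fix j' assume "j' < n \<and> x \<in> Q b n j'"
  then show "j' = j" using assms unfolding good_def by blast
qed

lemma cls_props:
  assumes "b \<in> X" "good b n" "x \<in> X"
  shows "cls b n x < n" "x \<in> Q b n (cls b n x)"
proof -
  have n: "n > 0" using assms by (simp add: good_def)
  obtain j where "j < n" "x \<in> Q b n j" using cover[OF assms(1) n] assms(3) by blast
  then show "cls b n x < n" "x \<in> Q b n (cls b n x)" using cls_unique[OF assms(2)] by auto
qed


lemma finite_maps: "finite {Fiter f \<tau> k | \<tau>. adm \<tau>}"
proof (induction k)
  case 0
  have "{Fiter f \<tau> 0 | \<tau>. adm \<tau>} \<subseteq> {\<lambda>x. x}" by (auto simp: fun_eq_iff)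
  then show ?case using finite_subset by blast
next
  case (Suc k)
  have "{Fiter f \<tau> (Suc k) | \<tau>. adm \<tau>} \<subseteq> (\<lambda>(l, g). (\<lambda>x. f l (g x))) ` (\<Lambda> \<times> {Fiter f \<tau> k | \<tau>. adm \<tau>})"
  proof
    fix h assume "h \<in> {Fiter f \<tau> (Suc k) | \<tau>. adm \<tau>}"
    then obtain \<tau> where h: "h = Fiter f \<tau> (Suc k)" "adm \<tau>" by blast
    have "h = (\<lambda>(l, g). (\<lambda>x. f l (g x))) (\<tau> k, Fiter f \<tau> k)" using h by (simp add: fun_eq_iff)
    moreover have "(\<tau> k, Fiter f \<tau> k) \<in> \<Lambda> \<times> {Fiter f \<tau> k | \<tau>. adm \<tau>}" using h by (auto simp: adm_def)
    ultimately show "h \<in> (\<lambda>(l, g). (\<lambda>x. f l (g x))) ` (\<Lambda> \<times> {Fiter f \<tau> k | \<tau>. adm \<tau>})" by (rule image_eqI)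
  qed
  moreover have "finite ((\<lambda>(l, g). (\<lambda>x. f l (g x))) ` (\<Lambda> \<times> {Fiter f \<tau> k | \<tau>. adm \<tau>}))"
    using fin Suc by simp
  ultimately show ?case by (rule finite_subset)
qed

lemma separation:
  assumes x0: "x0 \<in> X" "regularly_recurrent X \<Lambda> f x0" "\<not> ifs_periodic \<Lambda> f x0"
  shows "\<exists>n'>N. \<forall>c. 1 \<le> c \<and> c \<le> N \<and> c < n' \<longrightarrow> x0 \<notin> Q x0 n' c"
proof -
  define M where "M = (\<Union>k\<in>{1..N}. {Fiter f \<tau> k | \<tau>. adm \<tau>})"
  have finM: "finite M" unfolding M_def by (intro finite_UN_I finite_atLeastAtMost finite_maps)
  have contM: "continuous_on X g" if "g \<in> M" for g
  proof -
    from that obtain k \<tau> where "adm \<tau>" "g = Fiter f \<tau> k" unfolding M_def by auto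
    then show ?thesis using Fiter_cont by simp
  qed
  define S where "S = (\<lambda>g. g x0) ` M"
  have "x0 \<notin> S"
  proof
    assume "x0 \<in> S"
    then obtain g where g: "g \<in> M" "g x0 = x0" unfolding S_def by auto
    then obtain k \<tau> where "k \<in> {1..N}" "adm \<tau>" "g = Fiter f \<tau> k" unfolding M_def by auto
    then have "k \<in> {1..N}" "adm \<tau>" "Fiter f \<tau> k x0 = x0" using g by auto
    then have "ifs_periodic \<Lambda> f x0" unfolding ifs_periodic_def adm_def by auto
    then show False using x0(3) by simp
  qed
  moreover have "closed S" using finM unfolding S_def by (simp add: finite_imp_closed)
  ultimately obtain \<delta> where \<delta>: "\<delta> > 0" "ball x0 \<delta> \<subseteq> - S"
    using open_contains_ball[of "- S"] by (auto simp: open_Compl)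
  define C where "C = (\<Union>g\<in>M. X \<inter> g -` cball x0 (\<delta>/2))"
  have "closed C" unfolding C_def
    by (intro closed_UN finM ballI continuous_closed_preimage contM closedX) auto
  moreover have "x0 \<notin> C"
  proof
    assume "x0 \<in> C"
    then obtain g where g: "g \<in> M" "dist x0 (g x0) \<le> \<delta>/2" unfolding C_def by auto
    have "g x0 \<in> S" using g unfolding S_def by blast
    then have "g x0 \<notin> ball x0 \<delta>" using \<delta> by blast
    then show False using g \<delta> by simp
  qed
  ultimately obtain \<epsilon> where \<epsilon>: "\<epsilon> > 0" "ball x0 \<epsilon> \<subseteq> - C"
    using open_contains_ball[of "- C"] by (auto simp: open_Compl)
  obtain n where n: "n \<ge> 1" "\<forall>\<sigma> i. adm \<sigma> \<longrightarrow> Fiter f \<sigma> (n * i) x0 \<in> ball x0 \<epsilon>"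
    using rr_D[OF x0(2), of "ball x0 \<epsilon>"] \<epsilon> by auto
  define n' where "n' = n * (N + 1)"
  have "n' > N"
  proof -
    have "1 * (N + 1) \<le> n * (N + 1)" using n(1) by (rule mult_right_mono) simp
    then have "N + 1 \<le> n * (N + 1)" by simp
    then show ?thesis unfolding n'_def by linarith
  qed
  moreover have "x0 \<notin> Q x0 n' c" if c: "1 \<le> c" "c \<le> N" "c < n'" for c
  proof -
    have "lev x0 n' c \<subseteq> - ball x0 (\<delta>/2)"
    proof
      fix z assume "z \<in> lev x0 n' c"
      then obtain \<sigma> k where z: "z = Fiter f \<sigma> k x0" "adm \<sigma>" "k mod n' = c" by (auto simp: lev_def)
      define q where "q = k div n'"
      have k: "k = n' * q + c" using z(3) div_mult_mod_eq[of k n'] unfolding q_def by (simp add: mult.commute)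
      define y where "y = Fiter f \<sigma> (n' * q) x0"
      have zy: "z = Fiter f (\<lambda>i. \<sigma> (i + n' * q)) c y" unfolding y_def z(1) k by (rule Fiter_add)
      have "y = Fiter f \<sigma> (n * ((N + 1) * q)) x0" unfolding y_def n'_def by (simp only: mult.assoc)
      then have "y \<in> ball x0 \<epsilon>" using n(2) z(2) by simp
      then have yC: "y \<notin> C" using \<epsilon> by blast
      have yX: "y \<in> X" unfolding y_def using Fiter_in x0(1) z(2) by blast
      have gM: "Fiter f (\<lambda>i. \<sigma> (i + n' * q)) c \<in> M"
      proof -
        have "Fiter f (\<lambda>i. \<sigma> (i + n' * q)) c \<in> {Fiter f \<tau> c | \<tau>. adm \<tau>}"
          using adm_shift[OF z(2)] by blast
        moreover have "c \<in> {1..N}" using c by simp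
        ultimately show ?thesis unfolding M_def by (rule UN_I[rotated])
      qed
      have "Fiter f (\<lambda>i. \<sigma> (i + n' * q)) c y \<notin> cball x0 (\<delta>/2)"
      proof
        assume "Fiter f (\<lambda>i. \<sigma> (i + n' * q)) c y \<in> cball x0 (\<delta>/2)"
        then have "y \<in> X \<inter> Fiter f (\<lambda>i. \<sigma> (i + n' * q)) c -` cball x0 (\<delta>/2)" using yX by simp
        then have "y \<in> C" unfolding C_def using gM by (rule UN_I[rotated])
        then show False using yC by simp
      qed
      then have "dist x0 z > \<delta>/2" unfolding zy by simp
      then show "z \<in> - ball x0 (\<delta>/2)" by simp
    qed
    then have "Q x0 n' c \<subseteq> - ball x0 (\<delta>/2)" unfolding Q_def by (intro closure_minimal) auto
    then show ?thesis using \<delta> by auto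
  qed
  ultimately show ?thesis by blast
qed

lemma unbounded_good:
  assumes x0: "x0 \<in> X" "regularly_recurrent X \<Lambda> f x0" "\<not> ifs_periodic \<Lambda> f x0"
  shows "\<exists>d. good x0 d \<and> d > N"
proof -
  obtain n' where n': "n' > N" "\<forall>c. 1 \<le> c \<and> c \<le> N \<and> c < n' \<longrightarrow> x0 \<notin> Q x0 n' c"
    using separation[OF x0] by blast
  have "n' > 0" using n' by simp
  from dec[OF x0(1,2) this] obtain d where d: "0 < d" "good x0 d" "d = n' \<or> (d < n' \<and> x0 \<in> Q x0 n' d)"
    by blast
  have "d > N"
  proof (rule ccontr)
    assume dN: "\<not> d > N"
    show False
    proof (cases "d = n'")
      case True then show False using dN n'(1) by simp
    next
      case False
      then have "d < n'" "x0 \<in> Q x0 n' d" using d(3) by auto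
      then show False using n'(2) dN d(1) by auto
    qed
  qed
  then show ?thesis using d by blast
qed


end

locale ifs0 = ifs +
  fixes x0
  assumes x0: "x0 \<in> X" "regularly_recurrent X \<Lambda> f x0" "\<not> ifs_periodic \<Lambda> f x0"
begin

primrec ech :: "nat \<Rightarrow> nat" where
  "ech 0 = 1"
| "ech (Suc k) = (if good x0 (Suc k) then lcm (ech k) (Suc k) else ech k)"

lemma ech_good: "good x0 (ech k)"
  by (induction k) (auto simp: good_Suc0 good_lcm)

lemma ech_pos: "ech k > 0"
  using ech_good by (simp add: good_def)

lemma ech_mono: "k \<le> j \<Longrightarrow> ech k dvd ech j"
proof (induction j rule: dec_induct)
  case base then show ?case by simp
next
  case (step j)
  have "ech j dvd ech (Suc j)" by simp
  then show ?case using step.IH dvd_trans by blast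
qed

lemma good_dvd_ech: "good x0 g \<Longrightarrow> g dvd ech g"
proof -
  assume g: "good x0 g"
  then have "g > 0" by (simp add: good_def)
  then obtain g' where "g = Suc g'" using gr0_implies_Suc by blast
  then show ?thesis using g by simp
qed

lemma ech_unb: "\<exists>k. ech k > N"
proof -
  obtain d where d: "good x0 d" "d > N" using unbounded_good[OF x0] by blast
  have "d \<le> ech d" using good_dvd_ech[OF d(1)] ech_pos by (rule dvd_imp_le)
  then show ?thesis using d by (intro exI[of _ d]) simp
qed

definition stepK :: "nat \<Rightarrow> nat" where
  "stepK n = (LEAST k. n dvd ech k \<and> n < ech k)"

definition stepP :: "nat \<Rightarrow> nat" where
  "stepP n = (SOME p. prime p \<and> p dvd (ech (stepK n) div n))"

lemma step_ok:
  assumes n: "n > 0" "n dvd ech k0"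
  shows "n dvd ech (stepK n)" "n < ech (stepK n)" "\<And>k. n dvd ech k \<Longrightarrow> n < ech k \<Longrightarrow> stepK n \<le> k"
    "prime (stepP n)" "n * stepP n dvd ech (stepK n)"
proof -
  obtain k1 where k1: "ech k1 > n" using ech_unb by blast
  define k where "k = max k0 k1"
  have "ech k0 dvd ech k" "ech k1 dvd ech k" unfolding k_def by (auto intro: ech_mono)
  then have "n dvd ech k" "ech k1 \<le> ech k" using n(2) dvd_trans ech_pos dvd_imp_le by blast+
  then have Pk: "n dvd ech k \<and> n < ech k" using k1 by simp
  have PK: "n dvd ech (stepK n) \<and> n < ech (stepK n)" unfolding stepK_def using Pk by (rule LeastI)
  then show "n dvd ech (stepK n)" "n < ech (stepK n)" by auto
  show "\<And>k. n dvd ech k \<Longrightarrow> n < ech k \<Longrightarrow> stepK n \<le> k" unfolding stepK_def by (rule Least_le) simp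
  define E where "E = ech (stepK n)"
  have E: "E = n * (E div n)" using PK unfolding E_def by simp
  have "E div n \<noteq> 1" using E PK unfolding E_def by (metis less_irrefl mult_1_right)
  then have ex: "\<exists>p. prime p \<and> p dvd (E div n)" by (rule prime_factor_nat)
  have sp: "prime (stepP n) \<and> stepP n dvd (E div n)" unfolding stepP_def E_def
    using someI_ex[OF ex[unfolded E_def]] .
  then show "prime (stepP n)" by simp
  have "n * stepP n dvd n * (E div n)" using sp by simp
  then show "n * stepP n dvd ech (stepK n)" using E unfolding E_def by simp
qed

primrec nch :: "nat \<Rightarrow> nat" where
  "nch 0 = 1"
| "nch (Suc m) = nch m * stepP (nch m)"

lemma nch_inv: "nch m > 0 \<and> (\<exists>k. nch m dvd ech k)"
proof (induction m)
  case 0 then show ?case by (auto intro: exI[of _ 0])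
next
  case (Suc m)
  then obtain k where k: "nch m dvd ech k" and p: "nch m > 0" by blast
  have "prime (stepP (nch m))" "nch m * stepP (nch m) dvd ech (stepK (nch m))"
    using step_ok[OF p k] by auto
  then show ?case using p by (auto simp: prime_gt_0_nat)
qed

definition alpha :: "nat \<Rightarrow> nat" where "alpha m = stepP (nch m)"

lemma alpha_prime: "prime (alpha m)"
  using nch_inv[of m] step_ok unfolding alpha_def by blast

lemma nch_Suc: "nch (Suc m) = nch m * alpha m" by (simp add: alpha_def)

lemma nch_pos: "nch m > 0" using nch_inv by blast

lemma alpha_pos: "alpha m > 0" using alpha_prime prime_gt_0_nat by blast

lemma nch_good: "good x0 (nch m)"
proof (cases m)
  case 0 then show ?thesis by (simp add: good_Suc0)
next
  case (Suc m')
  obtain k where k: "nch m' dvd ech k" using nch_inv by blast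
  have "nch m dvd ech (stepK (nch m'))" using step_ok(5)[OF nch_pos k] Suc by simp
  then show ?thesis using good_dvd[OF ech_good] nch_pos by blast
qed

lemma nch_dvd_Suc: "nch m dvd nch (Suc m)" by simp

lemma nch_mono: "i \<le> j \<Longrightarrow> nch i dvd nch j"
proof (induction j rule: dec_induct)
  case base then show ?case by simp
next
  case (step j)
  then show ?case using nch_dvd_Suc dvd_trans by blast
qed

lemma nch_ge: "nch m \<ge> 2 ^ m"
proof (induction m)
  case 0 then show ?case by simp
next
  case (Suc m)
  have "alpha m \<ge> 2" using alpha_prime prime_ge_2_nat by blast
  then have "nch m * 2 \<le> nch m * alpha m" by simp
  moreover have "(2::nat) ^ Suc m = 2 ^ m * 2" by simp
  moreover have "2 ^ m * 2 \<le> nch m * 2" using Suc by simp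
  ultimately show ?case unfolding nch_Suc by linarith
qed

lemma nch_cofinal: "\<exists>m. ech k dvd nch m"
proof -
  have claim: "nch m dvd ech k \<or> ech k dvd nch m" for m
  proof (induction m)
    case 0 then show ?case by simp
  next
    case (Suc m)
    show ?case
    proof (cases "ech k dvd nch m")
      case True then show ?thesis using nch_dvd_Suc dvd_trans by blast
    next
      case False
      then have d: "nch m dvd ech k" using Suc by blast
      then have "nch m \<le> ech k" using ech_pos dvd_imp_le by blast
      moreover have "nch m \<noteq> ech k" using False by auto
      ultimately have lt: "nch m < ech k" by simp
      have "stepK (nch m) \<le> k" using step_ok(3)[OF nch_pos d d lt] .
      then have "ech (stepK (nch m)) dvd ech k" by (rule ech_mono)
      moreover have "nch (Suc m) dvd ech (stepK (nch m))" using step_ok(5)[OF nch_pos d] by simp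
      ultimately show ?thesis using dvd_trans by blast
    qed
  qed
  define m where "m = ech k"
  have "m < 2 ^ m" by (rule less_exp)
  then have "ech k < nch m" using nch_ge[of m] unfolding m_def by linarith
  then have "\<not> nch m dvd ech k" using ech_pos dvd_imp_le by (metis leD)
  then show ?thesis using claim by blast
qed

lemma good_cofinal: "good x0 g \<Longrightarrow> \<exists>m. g dvd nch m"
  using good_dvd_ech nch_cofinal dvd_trans by blast


lemma stepP_nch [simp]: "stepP (nch m) = alpha m" by (simp add: alpha_def)

definition cl :: "nat \<Rightarrow> 'a \<Rightarrow> nat" where "cl i x = cls x0 (nch i) x"

definition proj :: "'a \<Rightarrow> nat \<Rightarrow> nat" where "proj x i = cl (Suc i) x div nch i"

lemma cl_props:
  assumes "x \<in> X"
  shows "cl i x < nch i" "x \<in> Q x0 (nch i) (cl i x)"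
  using cls_props[OF x0(1) nch_good assms] unfolding cl_def by auto

lemma cl_uniq: "j < nch i \<Longrightarrow> x \<in> Q x0 (nch i) j \<Longrightarrow> cl i x = j"
  unfolding cl_def using cls_unique[OF nch_good] by blast

lemma cl_mod:
  assumes x: "x \<in> X" and ij: "i \<le> j"
  shows "cl j x mod nch i = cl i x"
proof -
  have "x \<in> Q x0 (nch i) (cl j x mod nch i)"
    using Q_mono_dvd[OF nch_mono[OF ij]] cl_props(2)[OF x, of j] by blast
  then show ?thesis using cl_uniq nch_pos by (metis mod_less_divisor)
qed

lemma cl_val:
  assumes x: "x \<in> X"
  shows "cl i x = (\<Sum>t<i. proj x t * nch t)"
proof (induction i)
  case 0 then show ?case using cl_props(1)[OF x, of 0] by simp
next
  case (Suc i)
  have "cl (Suc i) x = cl (Suc i) x div nch i * nch i + cl (Suc i) x mod nch i"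
    by simp
  also have "cl (Suc i) x mod nch i = cl i x" using cl_mod[OF x] by simp
  finally show ?case using Suc unfolding proj_def by simp
qed

lemma proj_lt:
  assumes x: "x \<in> X"
  shows "proj x i < alpha i"
  unfolding proj_def
  by (rule less_mult_imp_div_less) (use cl_props(1)[OF x, of "Suc i"] in \<open>simp add: nch_Suc mult.commute\<close>)

lemma cl_f:
  assumes x: "x \<in> X" and l: "l \<in> \<Lambda>"
  shows "cl i (f l x) = (cl i x + 1) mod nch i"
proof -
  have "f l x \<in> Q x0 (nch i) ((cl i x + 1) mod nch i)"
    using f_maps_Q[OF x0(1) l cl_props(2)[OF x]] .
  then show ?thesis using cl_uniq nch_pos by (metis mod_less_divisor)
qed

lemma proj_f:
  assumes x: "x \<in> X" and l: "l \<in> \<Lambda>"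
  shows "adding_machine alpha (proj x) i = proj (f l x) i"
proof -
  have "adding_machine alpha (proj x) i = ((((\<Sum>t<Suc i. proj x t * nch t) + 1) mod nch (Suc i)) div nch i)"
    by (rule am_val) (auto simp: nch_Suc alpha_pos)
  also have "(\<Sum>t<Suc i. proj x t * nch t) = cl (Suc i) x" using cl_val[OF x] by simp
  also have "((cl (Suc i) x + 1) mod nch (Suc i)) div nch i = proj (f l x) i"
    unfolding proj_def cl_f[OF x l] ..
  finally show ?thesis .
qed

lemma proj_in_Delta: "x \<in> X \<Longrightarrow> proj x \<in> Delta alpha"
  using proj_lt by (auto simp: Delta_def)

lemma proj_surj:
  assumes r: "r \<in> Delta alpha"
  shows "\<exists>y\<in>X. proj y = r"
proof -
  define v where "v i = (\<Sum>t<i. r t * nch t)" for i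
  have vS: "v (Suc i) = v i + r i * nch i" for i by (simp add: v_def)
  have vlt: "v i < nch i" for i
  proof (induction i)
    case 0 then show ?case by (simp add: v_def)
  next
    case (Suc i)
    have "r i + 1 \<le> alpha i" using r by (simp add: Delta_def Suc_le_eq)
    then have "(r i + 1) * nch i \<le> alpha i * nch i" by (rule mult_right_mono) simp
    then show ?case using Suc by (simp add: vS nch_Suc algebra_simps)
  qed
  define K where "K i = Q x0 (nch i) (v i)" for i
  have Knest: "K (Suc i) \<subseteq> K i" for i
  proof -
    have "v (Suc i) mod nch i = v i" using vlt[of i] by (simp add: vS)
    then show ?thesis unfolding K_def using Q_mono_dvd[OF nch_dvd_Suc[of i], where b = x0 and j = "v (Suc i)"] by simp
  qed
  have Kanti: "i \<le> j \<Longrightarrow> K j \<subseteq> K i" for i j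
  proof (induction j rule: dec_induct)
    case base then show ?case by simp
  next
    case (step j) then show ?case using Knest[of j] by blast
  qed
  have "X \<inter> \<Inter>(range K) \<noteq> {}"
  proof (rule compact_imp_fip[OF cpt])
    show "closed T" if "T \<in> range K" for T using that closed_Q unfolding K_def by auto
    fix F' assume F': "finite F'" "F' \<subseteq> range K"
    obtain I where I: "finite I" "F' = K ` I" using finite_subset_image[OF F'(1) F'(2)] by blast
    define m where "m = Max (insert 0 I)"
    have "i \<le> m" if "i \<in> I" for i unfolding m_def using I(1) that by simp
    then have "K m \<subseteq> \<Inter>F'" using Kanti I(2) by blast
    moreover have "K m \<subseteq> X" unfolding K_def by (rule Q_sub[OF x0(1)])
    moreover have "K m \<noteq> {}" unfolding K_def using Q_nonempty[OF x0(1) vlt] .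
    ultimately show "X \<inter> \<Inter>F' \<noteq> {}" by blast
  qed
  then obtain y where y: "y \<in> X" "\<And>i. y \<in> K i" by blast
  have "cl i y = v i" for i using cl_uniq[OF vlt] y(2) unfolding K_def by blast
  then have "proj y i = r i" for i
    unfolding proj_def using vlt[of i] nch_pos[of i] by (simp add: vS)
  then show ?thesis using y(1) by blast
qed

lemma proj_cont:
  assumes x: "x \<in> X" and e: "e > 0"
  shows "\<exists>d>0. \<forall>y\<in>X. dist y x < d \<longrightarrow> d_alpha (proj y) (proj x) < e"
proof -
  obtain K where K: "(1/2::real) ^ K < e" using real_arch_pow_inv[OF e, of "1/2"] by auto
  define c where "c = cl K x"
  define C where "C = (\<Union>j\<in>{j. j < nch K \<and> j \<noteq> c}. Q x0 (nch K) j)"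
  have "closed C" unfolding C_def by (intro closed_UN closed_Q ballI) auto
  moreover have "x \<notin> C"
  proof
    assume "x \<in> C"
    then obtain j where "j \<in> {j. j < nch K \<and> j \<noteq> c}" "x \<in> Q x0 (nch K) j" unfolding C_def by (rule UN_E)
    then have "cl K x = j" using cl_uniq by blast
    then show False using \<open>j \<in> _\<close> unfolding c_def by simp
  qed
  ultimately obtain \<delta> where \<delta>: "\<delta> > 0" "ball x \<delta> \<subseteq> - C"
    using open_contains_ball[of "- C"] by (auto simp: open_Compl)
  have "d_alpha (proj y) (proj x) < e" if y: "y \<in> X" "dist y x < \<delta>" for y
  proof -
    have "y \<in> ball x \<delta>" using y by (simp add: dist_commute)
    then have yC: "y \<notin> C" using \<delta> by blast
    have "cl K y = c"
    proof (rule ccontr)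
      assume "cl K y \<noteq> c"
      then have "cl K y \<in> {j. j < nch K \<and> j \<noteq> c}" using cl_props(1)[OF y(1)] by simp
      then have "y \<in> C" unfolding C_def using cl_props(2)[OF y(1)] by (rule UN_I)
      then show False using yC by simp
    qed
    have "proj y t = proj x t" if "t < K" for t
    proof -
      have "cl (Suc t) y = cl (Suc t) x"
        using cl_mod[OF y(1), of "Suc t" K] cl_mod[OF x, of "Suc t" K] that \<open>cl K y = c\<close>
        unfolding c_def by simp
      then show ?thesis by (simp add: proj_def)
    qed
    then have "d_alpha (proj y) (proj x) \<le> (1/2) ^ K" by (rule d_alpha_bound)
    then show ?thesis using K by simp
  qed
  then show ?thesis using \<delta> by blast
qed

lemma proj_fiber:
  assumes x: "x \<in> X" "regularly_recurrent X \<Lambda> f x" and y: "y \<in> X" "proj y = proj x"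
  shows "y = x"
proof -
  have cly: "cl i y = cl i x" for i using cl_val[OF x(1)] cl_val[OF y(1)] y(2) by simp
  have "dist y x \<le> e" if e: "e > 0" for e
  proof -
    obtain n where n: "n \<ge> 1" "\<forall>\<sigma> i. adm \<sigma> \<longrightarrow> Fiter f \<sigma> (n * i) x \<in> ball x e"
      using rr_D[OF x(2), of "ball x e"] e by auto
    have n0: "n > 0" using n by simp
    obtain d where d: "0 < d" "good x d" "Q x d 0 \<subseteq> Q x n 0" using dec[OF x n0] by blast
    have Qn: "Q x n 0 \<subseteq> cball x e"
      unfolding Q_def
    proof (rule closure_minimal)
      show "lev x n 0 \<subseteq> cball x e"
      proof
        fix z assume "z \<in> lev x n 0"
        then obtain \<sigma> k where z: "z = Fiter f \<sigma> k x" "adm \<sigma>" "k mod n = 0" by (auto simp: lev_def)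
        have "k = n * (k div n)" using z(3) mult_div_mod_eq[of n k] by simp
        then have "z \<in> ball x e" using n(2) z by metis
        then show "z \<in> cball x e" by simp
      qed
    qed simp
    have gd: "good x0 d" using good_transfer[OF x(1) x0(1) d(2)] .
    obtain m where m: "d dvd nch m" using good_cofinal[OF gd] by blast
    define M where "M = nch m"
    define c where "c = cl m x"
    have cM: "c < M" "x \<in> Q x0 M c" using cl_props[OF x(1), of m] unfolding c_def M_def by auto
    have yM: "y \<in> Q x0 M c" using cl_props(2)[OF y(1), of m] cly unfolding c_def M_def by simp
    have "y \<in> (\<Union>j<M. Q x M j)" using cover[OF x(1)] nch_pos y(1) unfolding M_def by blast
    then obtain t where t: "t \<in> {..<M}" "y \<in> Q x M t" by (rule UN_E)
    have "y \<in> Q x0 M ((c + t) mod M)" using Q_shift[OF x(1) cM(2) x0(1)] t(2) by blast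
    then have "cl m y = (c + t) mod M" using cl_uniq nch_pos unfolding M_def by (metis mod_less_divisor)
    then have "(c + t) mod M = (c + 0) mod M" using cly cM(1) unfolding c_def by simp
    then have "t = 0" using mod_add_cancel_lt t(1) nch_pos unfolding M_def by (metis lessThan_iff)
    then have "y \<in> Q x M 0" using t by simp
    also have "\<dots> \<subseteq> Q x d 0" using Q_mono_dvd[OF m[folded M_def], of x 0] by simp
    also have "\<dots> \<subseteq> cball x e" using d(3) Qn by blast
    finally show ?thesis by (simp add: dist_commute)
  qed
  then have "dist y x = 0"
    by (metis dist_not_less_zero field_lbound_gt_zero less_le_not_le linorder_neqE_linordered_idom) 
  then show ?thesis by simp
qed

end

theorem theorem4p6:
  fixes X :: "'a::metric_space set" and \<Lambda> :: "'l set" and f :: "'l \<Rightarrow> 'a \<Rightarrow> 'a"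
  assumes "finite \<Lambda>" and "\<Lambda> \<noteq> {}"
    and "compact X" and "infinite X"
    and "\<And>l. l \<in> \<Lambda> \<Longrightarrow> continuous_on X (f l)"
    and "\<And>l. l \<in> \<Lambda> \<Longrightarrow> f l ` X \<subseteq> X"
    and "ifs_minimal X \<Lambda> f"
    and "\<exists>x\<in>X. regularly_recurrent X \<Lambda> f x \<and> \<not> ifs_periodic \<Lambda> f x"
  shows "\<exists>(\<alpha>::nat \<Rightarrow> nat) (\<pi>::'a \<Rightarrow> nat \<Rightarrow> nat).
     (\<forall>i. prime (\<alpha> i)) \<and>
     \<pi> ` X = Delta \<alpha> \<and>
     (\<forall>x\<in>X. \<forall>e>0. \<exists>d>0. \<forall>y\<in>X. dist y x < d \<longrightarrow> d_alpha (\<pi> y) (\<pi> x) < e) \<and>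
     (\<forall>l\<in>\<Lambda>. \<forall>x\<in>X. adding_machine \<alpha> (\<pi> x) = \<pi> (f l x)) \<and>
     (\<forall>x\<in>X. regularly_recurrent X \<Lambda> f x \<longrightarrow> {y\<in>X. \<pi> y = \<pi> x} = {x})"
proof -
  obtain x0 where x0: "x0 \<in> X" "regularly_recurrent X \<Lambda> f x0" "\<not> ifs_periodic \<Lambda> f x0"
    using assms(8) by blast
  interpret I: ifs0 X \<Lambda> f x0
    by unfold_locales (use assms x0 in auto)
  have A1: "\<forall>i. prime (I.alpha i)" using I.alpha_prime by blast
  have A2: "I.proj ` X = Delta I.alpha"
  proof
    show "I.proj ` X \<subseteq> Delta I.alpha" using I.proj_in_Delta by blast
    show "Delta I.alpha \<subseteq> I.proj ` X"
    proof
      fix r assume "r \<in> Delta I.alpha"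
      then obtain y where "y \<in> X" "I.proj y = r" using I.proj_surj by blast
      then show "r \<in> I.proj ` X" by blast
    qed
  qed
  have A3: "\<forall>x\<in>X. \<forall>e>0. \<exists>d>0. \<forall>y\<in>X. dist y x < d \<longrightarrow> d_alpha (I.proj y) (I.proj x) < e"
    using I.proj_cont by blast
  have A4: "\<forall>l\<in>\<Lambda>. \<forall>x\<in>X. adding_machine I.alpha (I.proj x) = I.proj (f l x)"
    using I.proj_f by blast
  have A5: "\<forall>x\<in>X. regularly_recurrent X \<Lambda> f x \<longrightarrow> {y\<in>X. I.proj y = I.proj x} = {x}"
    using I.proj_fiber by blast
  show ?thesis using A1 A2 A3 A4 A5 by blast
qed

end
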